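(* Let $\mathrm{Sol}$ be $\mathbb{R}^3$ with Riemannian metric $e^{-2z}dx^2+e^{2z}dy^2+dz^2$ and let $\mathcal{S}_r$ be the metric sphere of radius $r$ centered at the origin. Then $N_{X,r}=N_{Y,r}=2$.
   Context: $\eta_X(x,y,z)=(0,y,z)$ and $\eta_Y(x,y,z)=(x,0,z)$ are the projections onto the planes $\{x=0\}$ and $\{y=0\}$. For $W\in\{X,Y\}$, $N_{W,r}$ is the smallest integer $N$ such that the restriction of $\eta_W$ to $\mathcal{S}_r$ is at most $N$-to-$1$. *)

theory Defs
  imports "HOL-Analysis.Analysis"
begin

type_synonym point3 = "real \<times> real \<times> real"

definition sol_speed :: "(real \<Rightarrow> point3) \<Rightarrow> real \<Rightarrow> real" where
  "sol_speed \<gamma> t =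
     (let (x, y, z) = \<gamma> t; (a, b, c) = vector_derivative \<gamma> (at t)
      in sqrt (exp (-2 * z) * a^2 + exp (2 * z) * b^2 + c^2))"

definition sol_dist :: "point3 \<Rightarrow> point3 \<Rightarrow> real" where
  "sol_dist p q = Inf {L. \<exists>\<gamma>. \<gamma> piecewise_C1_differentiable_on {0..1} \<and>
       \<gamma> 0 = p \<and> \<gamma> 1 = q \<and> (sol_speed \<gamma> has_integral L) {0..1}}"

definition sol_sphere :: "real \<Rightarrow> point3 set" where
  "sol_sphere r = {p. sol_dist (0, 0, 0) p = r}"

definition eta_X :: "point3 \<Rightarrow> point3" where
  "eta_X p = (case p of (x, y, z) \<Rightarrow> (0, y, z))"

definition eta_Y :: "point3 \<Rightarrow> point3" where
  "eta_Y p = (case p of (x, y, z) \<Rightarrow> (x, 0, z))"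

definition at_most_N_to_one :: "('a \<Rightarrow> 'b) \<Rightarrow> 'a set \<Rightarrow> nat \<Rightarrow> bool" where
  "at_most_N_to_one f S N \<longleftrightarrow>
     (\<forall>q. finite {p \<in> S. f p = q} \<and> card {p \<in> S. f p = q} \<le> N)"

definition N_num :: "(point3 \<Rightarrow> point3) \<Rightarrow> real \<Rightarrow> nat" where
  "N_num \<eta> r = (LEAST N. at_most_N_to_one \<eta> (sol_sphere r) N)"

end

theory Submission
  imports Defs
begin



definition spd :: "point3 \<Rightarrow> point3 \<Rightarrow> real" where
  "spd p v = sqrt (exp (-2 * snd (snd p)) * (fst v)^2 + exp (2 * snd (snd p)) * (fst (snd v))^2 + (snd (snd v))^2)"

lemma sol_speed_spd: "sol_speed \<gamma> t = spd (\<gamma> t) (vector_derivative \<gamma> (at t))"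
  by (simp add: sol_speed_def spd_def split: prod.splits)

lemma spd_nonneg: "0 \<le> spd p v" by (simp add: spd_def)

lemma spd_z: "\<bar>snd (snd v)\<bar> \<le> spd p v"
  unfolding spd_def by (rule real_le_rsqrt) (simp add: add_nonneg_nonneg)

lemma spd_x: "exp (- snd (snd p)) * \<bar>fst v\<bar> \<le> spd p v"
proof -
  have "(exp (- snd (snd p)) * \<bar>fst v\<bar>)^2 = exp (-2 * snd (snd p)) * (fst v)^2"
    by (simp add: power_mult_distrib exp_double[symmetric] power2_eq_square[of "exp _"] flip: exp_add)
  then show ?thesis unfolding spd_def
    by (intro real_le_rsqrt) (simp add: add_nonneg_nonneg)
qed

definition adm :: "(real \<Rightarrow> point3) \<Rightarrow> point3 \<Rightarrow> real \<Rightarrow> bool" where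
  "adm \<gamma> p L \<longleftrightarrow> \<gamma> piecewise_C1_differentiable_on {0..1} \<and> \<gamma> 0 = (0,0,0) \<and> \<gamma> 1 = p \<and>
     (sol_speed \<gamma> has_integral L) {0..1}"

definition lens :: "point3 \<Rightarrow> real set" where
  "lens p = {L. \<exists>\<gamma>. adm \<gamma> p L}"

abbreviation d :: "point3 \<Rightarrow> real" where "d p \<equiv> sol_dist (0,0,0) p"

lemma d_lens: "d p = Inf (lens p)"
  by (simp add: sol_dist_def lens_def adm_def)

lemma lens_nonneg: "L \<in> lens p \<Longrightarrow> 0 \<le> L"
proof -
  assume "L \<in> lens p"
  then obtain \<gamma> where "(sol_speed \<gamma> has_integral L) {0..1}" by (auto simp: lens_def adm_def)
  then show ?thesis by (rule has_integral_nonneg) (simp add: sol_speed_spd spd_nonneg)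
qed

lemma lens_bdd: "bdd_below (lens p)"
  using lens_nonneg by (meson bdd_belowI)

lemma lens_ne: "lens p \<noteq> {}"
proof -
  let ?g = "\<lambda>t::real. t *\<^sub>R p"
  have der: "(?g has_vector_derivative p) (at t)" for t
    by (auto intro!: derivative_eq_intros)
  have vd: "vector_derivative ?g (at t) = p" for t
    using der vector_derivative_at by blast
  have c1: "?g C1_differentiable_on {0..1}"
    unfolding C1_differentiable_on_def using der by (intro exI[of _ "\<lambda>_. p"]) auto
  have "continuous_on {0..1} (\<lambda>t. spd (?g t) p)"
    unfolding spd_def by (intro continuous_intros)
  then have "sol_speed ?g integrable_on {0..1}"
    by (simp add: sol_speed_spd vd integrable_continuous_interval)
  then have "adm ?g p (integral {0..1} (sol_speed ?g))"
    unfolding adm_def using C1_differentiable_imp_piecewise[OF c1] by (simp add: zero_prod_def has_integral_integral)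
  then show ?thesis unfolding lens_def by blast
qed

lemma d_le: "L \<in> lens p \<Longrightarrow> d p \<le> L"
  by (simp add: d_lens cInf_lower lens_bdd)

lemma d_ge: "(\<And>L. L \<in> lens p \<Longrightarrow> c \<le> L) \<Longrightarrow> c \<le> d p"
  by (simp add: d_lens cInf_greatest lens_ne)

lemma d_nonneg: "0 \<le> d p" using d_ge lens_nonneg by blast

lemma d_approx: assumes "d p < c" obtains L where "L \<in> lens p" "L < c"
  using assms by (metis d_lens cInf_lessD lens_ne)


lemma pw_obtain:
  assumes "\<gamma> piecewise_C1_differentiable_on {0..1}"
  obtains T where "finite T" "continuous_on {0..1} \<gamma>"
    "\<And>t. t \<in> {0..1} - T \<Longrightarrow> (\<gamma> has_vector_derivative vector_derivative \<gamma> (at t)) (at t)"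
    "continuous_on ({0..1} - T) (\<lambda>t. vector_derivative \<gamma> (at t))"
  using assms unfolding piecewise_C1_differentiable_on_def C1_differentiable_on_eq
  by (metis vector_derivative_works)

lemma ftc:
  fixes \<gamma> :: "real \<Rightarrow> point3"
  assumes pw: "\<gamma> piecewise_C1_differentiable_on {0..1}" and ab: "0 \<le> a" "a \<le> b" "b \<le> 1"
  shows "((\<lambda>t. vector_derivative \<gamma> (at t)) has_integral \<gamma> b - \<gamma> a) {a..b}"
proof -
  obtain T where T: "finite T" "continuous_on {0..1} \<gamma>"
    "\<And>t. t \<in> {0..1} - T \<Longrightarrow> (\<gamma> has_vector_derivative vector_derivative \<gamma> (at t)) (at t)"
    using pw_obtain[OF pw] by metis
  show ?thesis
  proof (rule fundamental_theorem_of_calculus_interior_strong[where f=\<gamma> and S=T and a=a and b=b and f'="\<lambda>t. vector_derivative \<gamma> (at t)"])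
    show "finite T" "a \<le> b" using T(1) ab by auto
    show "continuous_on {a..b} \<gamma>" using T(2) by (rule continuous_on_subset) (use ab in auto)
    show "(\<gamma> has_vector_derivative vector_derivative \<gamma> (at x)) (at x)" if "x \<in> {a<..<b} - T" for x
      using T(3) that ab by auto
  qed
qed

lemma ftc_x:
  fixes \<gamma> :: "real \<Rightarrow> point3"
  assumes pw: "\<gamma> piecewise_C1_differentiable_on {0..1}" and ab: "0 \<le> a" "a \<le> b" "b \<le> 1"
  shows "((\<lambda>t. fst (vector_derivative \<gamma> (at t))) has_integral fst (\<gamma> b) - fst (\<gamma> a)) {a..b}"
  using has_integral_linear[OF ftc[OF assms] bounded_linear_fst] by (simp add: o_def)

lemma ftc_z:
  fixes \<gamma> :: "real \<Rightarrow> point3"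
  assumes pw: "\<gamma> piecewise_C1_differentiable_on {0..1}" and ab: "0 \<le> a" "a \<le> b" "b \<le> 1"
  shows "((\<lambda>t. snd (snd (vector_derivative \<gamma> (at t)))) has_integral snd (snd (\<gamma> b)) - snd (snd (\<gamma> a))) {a..b}"
  using has_integral_linear[OF ftc[OF assms] bounded_linear_compose[OF bounded_linear_snd bounded_linear_snd]]
  by (simp add: o_def)

lemma zbound:
  assumes "adm \<gamma> p L" "\<tau> \<in> {0..1}"
  shows "\<bar>snd (snd (\<gamma> \<tau>))\<bar> \<le> L"
proof -
  have pw: "\<gamma> piecewise_C1_differentiable_on {0..1}" and g0: "\<gamma> 0 = (0,0,0)"
    and L: "(sol_speed \<gamma> has_integral L) {0..1}" using assms(1) by (auto simp: adm_def)
  have int\<tau>: "sol_speed \<gamma> integrable_on {0..\<tau>}"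
    using integrable_subinterval_real[of "sol_speed \<gamma>" 0 1 0 \<tau>] L assms(2) by auto
  have le: "integral {0..\<tau>} (sol_speed \<gamma>) \<le> L"
    using has_integral_subset_le[of "{0..\<tau>}" "{0..1}" "sol_speed \<gamma>"] int\<tau> L assms(2)
    by (auto simp: spd_nonneg sol_speed_spd)
  have z: "((\<lambda>t. snd (snd (vector_derivative \<gamma> (at t)))) has_integral snd (snd (\<gamma> \<tau>))) {0..\<tau>}"
    using ftc_z[OF pw, of 0 \<tau>] assms(2) g0 by simp
  have a: "snd (snd (\<gamma> \<tau>)) \<le> integral {0..\<tau>} (sol_speed \<gamma>)"
    by (rule has_integral_le[OF z integrable_integral[OF int\<tau>]])
       (metis abs_le_D1 spd_z sol_speed_spd)
  have b: "- snd (snd (\<gamma> \<tau>)) \<le> integral {0..\<tau>} (sol_speed \<gamma>)"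
    by (rule has_integral_le[OF has_integral_neg[OF z] integrable_integral[OF int\<tau>]])
       (metis abs_le_D2 spd_z sol_speed_spd)
  show ?thesis using a b le by linarith
qed




lemma master:
  fixes A :: "point3 \<Rightarrow> point3" and w :: point3 and g :: "real \<Rightarrow> real"
  assumes adm: "adm \<gamma> p L" and bl: "bounded_linear A" and g: "g integrable_on {0..1}"
  and bnd: "\<And>t v. t \<in> {0<..<1} \<Longrightarrow> (\<gamma> has_vector_derivative v) (at t) \<Longrightarrow>
              spd (A (\<gamma> t) + t *\<^sub>R w) (A v + w) \<le> g t"
  shows "d (A p + w) \<le> integral {0..1} g"
proof -
  have pw: "\<gamma> piecewise_C1_differentiable_on {0..1}" and g0: "\<gamma> 0 = (0,0,0)" and g1: "\<gamma> 1 = p"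
    using adm by (auto simp: adm_def)
  obtain T where T: "finite T" "continuous_on {0..1} \<gamma>"
    "\<And>t. t \<in> {0..1} - T \<Longrightarrow> (\<gamma> has_vector_derivative vector_derivative \<gamma> (at t)) (at t)"
    "continuous_on ({0..1} - T) (\<lambda>t. vector_derivative \<gamma> (at t))"
    using pw_obtain[OF pw] by metis
  define \<gamma>' where "\<gamma>' = (\<lambda>t. A (\<gamma> t) + t *\<^sub>R w)"
  define D where "D = (\<lambda>t. A (vector_derivative \<gamma> (at t)) + w)"
  have der': "(\<gamma>' has_vector_derivative D t) (at t)" if "t \<in> {0..1} - T" for t
  proof -
    have "((\<lambda>t. A (\<gamma> t)) has_vector_derivative A (vector_derivative \<gamma> (at t))) (at t)"
      by (rule bounded_linear.has_vector_derivative[OF bl T(3)[OF that]])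
    moreover have "((\<lambda>t. t *\<^sub>R w) has_vector_derivative w) (at t)"
      by (auto intro!: derivative_eq_intros)
    ultimately show ?thesis unfolding \<gamma>'_def D_def by (rule has_vector_derivative_add)
  qed
  have vd': "vector_derivative \<gamma>' (at t) = D t" if "t \<in> {0..1} - T" for t
    using der'[OF that] vector_derivative_at by blast
  have contD: "continuous_on ({0..1} - T) D"
    unfolding D_def by (intro continuous_on_add linear_continuous_on_compose[OF T(4) bounded_linear.linear[OF bl]] continuous_on_const)
  have cont': "continuous_on {0..1} \<gamma>'"
    unfolding \<gamma>'_def by (intro continuous_on_add linear_continuous_on_compose[OF T(2) bounded_linear.linear[OF bl]] continuous_intros)
  have C1: "\<gamma>' C1_differentiable_on {0..1} - T"
    unfolding C1_differentiable_on_def using der' contD by blast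
  have pw': "\<gamma>' piecewise_C1_differentiable_on {0..1}"
    unfolding piecewise_C1_differentiable_on_def using C1 cont' T(1) by blast
  define S where "S = {0<..<1} - T"
  have SS: "S \<subseteq> {0..1} - T" unfolding S_def by auto
  have spd_eq: "sol_speed \<gamma>' t = spd (\<gamma>' t) (D t)" if "t \<in> S" for t
    using vd' SS that by (simp add: sol_speed_spd subset_iff)
  have c1: "continuous_on S \<gamma>'" using cont' SS by (meson continuous_on_subset Diff_subset subset_trans)
  have c2: "continuous_on S D" using contD SS by (rule continuous_on_subset)
  have "continuous_on S (\<lambda>t. spd (\<gamma>' t) (D t))"
    unfolding spd_def by (intro continuous_intros c1 c2)
  then have contS: "continuous_on S (sol_speed \<gamma>')"
    using spd_eq continuous_on_cong by (metis (no_types, lifting))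
  have negS: "negligible ({0..1} - S)"
    by (rule negligible_subset[of "insert 0 (insert 1 T)"]) (use T(1) in \<open>auto simp: S_def\<close>)
  have Sleb: "S \<in> sets lebesgue"
  proof -
    have "{0..1} - ({0..1} - S) = S" unfolding S_def by auto
    moreover have "{0..1::real} \<in> sets lebesgue" by simp
    moreover have "{0..1} - S \<in> sets lebesgue" using negS negligible_imp_sets by blast
    ultimately show ?thesis by (metis sets.Diff)
  qed
  have meas: "sol_speed \<gamma>' \<in> borel_measurable (lebesgue_on S)"
    by (rule continuous_imp_measurable_on_sets_lebesgue[OF contS Sleb])
  have gS: "g integrable_on S"
    by (rule integrable_spike_set[OF g]) (auto intro: negligible_subset[OF negS] simp: S_def)
  have bndS: "\<bar>sol_speed \<gamma>' t\<bar> \<le> g t" if "t \<in> S" for t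
  proof -
    have "t \<in> {0<..<1}" "t \<in> {0..1} - T" using that SS by (auto simp: S_def)
    then show ?thesis
      using bnd[OF _ T(3)] spd_eq[OF that] spd_nonneg by (simp add: D_def \<gamma>'_def)
  qed
  have intS: "sol_speed \<gamma>' integrable_on S"
    by (rule measurable_bounded_by_integrable_imp_integrable_real[OF meas gS bndS Sleb])
  have int01: "sol_speed \<gamma>' integrable_on {0..1}"
    by (rule integrable_spike_set[OF intS]) (auto intro: negligible_subset[OF negS] simp: S_def)
  define L' where "L' = integral {0..1} (sol_speed \<gamma>')"
  have z: "(0::real,0::real,0::real) = 0" by (simp add: zero_prod_def)
  have "adm \<gamma>' (A p + w) L'"
    unfolding adm_def L'_def using pw' int01 g0 g1
    by (simp add: \<gamma>'_def z linear_simps(3)[OF bl] has_integral_integral)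
  then have "d (A p + w) \<le> L'" by (intro d_le) (auto simp: lens_def)
  also have "L' \<le> integral {0..1} g"
  proof -
    have "(sol_speed \<gamma>' has_integral L') S"
      using int01 unfolding L'_def has_integral_integral
      by (subst has_integral_spike_set_eq) (auto intro: negligible_subset[OF negS] simp: S_def)
    moreover have "(g has_integral integral {0..1} g) S"
      using g unfolding has_integral_integral
      by (subst has_integral_spike_set_eq) (auto intro: negligible_subset[OF negS] simp: S_def)
    ultimately show ?thesis
      by (rule has_integral_le) (use bndS in force)
  qed
  finally show ?thesis .
qed




lemma key_ineq:
  fixes sp u k al :: real
  assumes "0 \<le> u" "u \<le> sp" "0 \<le> k" "k \<le> 1/2" "0 \<le> al"
  shows "sqrt (sp^2 - 2*k*u^2) \<le> sp - 2*k*al*u + k*al^2* sp"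
proof -
  define t where "t = 2*al*u - al^2* sp"
  have ts: "t* sp \<le> u^2"
  proof -
    have "0 \<le> (u - al* sp)^2" by simp
    then show ?thesis unfolding t_def by (simp add: power2_eq_square algebra_simps)
  qed
  have "t \<le> 2*al* sp - al^2* sp" unfolding t_def using assms by (simp add: mult_left_mono)
  also have "\<dots> = sp - (al - 1)^2 * sp" by (simp add: power2_eq_square algebra_simps)
  also have "\<dots> \<le> sp" using assms by simp
  finally have "t \<le> sp" .
  then have "k*t \<le> k* sp" using assms by (simp add: mult_left_mono)
  also have "\<dots> \<le> (1/2) * sp" using assms by (intro mult_right_mono) auto
  finally have pos: "0 \<le> sp - k*t" using assms by linarith
  have "sp^2 - 2*k*u^2 \<le> sp^2 - 2*k*(t* sp)" using ts assms by (simp add: mult_left_mono)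
  also have "\<dots> \<le> (sp - k*t)^2"
  proof -
    have "0 \<le> (k*t)^2" by simp
    then show ?thesis by (simp add: power2_eq_square algebra_simps)
  qed
  finally have "sqrt (sp^2 - 2*k*u^2) \<le> sqrt ((sp - k*t)^2)" by (rule real_sqrt_le_mono)
  also have "\<dots> = sp - k*t" using pos by simp
  finally show ?thesis unfolding t_def by (simp add: algebra_simps power2_eq_square)
qed

lemma tri_ineq:
  fixes E a \<delta> B :: real
  assumes "0 \<le> E" "0 \<le> B"
  shows "sqrt (E*(a+\<delta>)^2 + B) \<le> sqrt (E*a^2 + B) + sqrt E * \<bar>\<delta>\<bar>"
proof -
  have s1: "sqrt E * \<bar>a\<bar> \<le> sqrt (E*a^2 + B)"
    by (rule real_le_rsqrt) (use assms in \<open>simp add: power_mult_distrib\<close>)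
  have "E*a*\<delta> \<le> E*(\<bar>a\<bar>*\<bar>\<delta>\<bar>)" using assms
    by (metis abs_ge_self abs_mult mult.assoc mult_left_mono)
  also have "\<dots> = (sqrt E * \<bar>a\<bar>) * (sqrt E * \<bar>\<delta>\<bar>)" using assms
    by (simp add: algebra_simps)
  also have "\<dots> \<le> sqrt (E*a^2 + B) * (sqrt E * \<bar>\<delta>\<bar>)"
    by (rule mult_right_mono[OF s1]) (use assms in simp)
  finally have c: "E*a*\<delta> \<le> sqrt (E*a^2 + B) * (sqrt E * \<bar>\<delta>\<bar>)" .
  have "E*(a+\<delta>)^2 + B \<le> (sqrt (E*a^2 + B) + sqrt E * \<bar>\<delta>\<bar>)^2"
    using c assms by (simp add: power2_eq_square algebra_simps power_mult_distrib)
  then have "sqrt (E*(a+\<delta>)^2 + B) \<le> sqrt ((sqrt (E*a^2 + B) + sqrt E * \<bar>\<delta>\<bar>)^2)"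
    by (rule real_sqrt_le_mono)
  also have "\<dots> = sqrt (E*a^2 + B) + sqrt E * \<bar>\<delta>\<bar>" using assms by simp
  finally show ?thesis .
qed

definition Sx :: "real \<Rightarrow> point3 \<Rightarrow> point3" where
  "Sx c p = (c * fst p, fst (snd p), snd (snd p))"
definition Sw :: "point3 \<Rightarrow> point3" where
  "Sw p = (fst (snd p), fst p, - snd (snd p))"

lemma bl_Sx: "bounded_linear (Sx c)"
  by (rule linear_conv_bounded_linear[THEN iffD1]) (auto intro!: linearI simp: Sx_def algebra_simps)
lemma bl_Sw: "bounded_linear Sw"
  by (rule linear_conv_bounded_linear[THEN iffD1]) (auto intro!: linearI simp: Sw_def algebra_simps)

lemma d_transfer: assumes "\<And>\<gamma> L. adm \<gamma> p L \<Longrightarrow> d q \<le> L" shows "d q \<le> d p"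
  using assms by (intro d_ge) (auto simp: lens_def)

lemma adm_vd: assumes "(\<gamma> has_vector_derivative v) (at t)" shows "sol_speed \<gamma> t = spd (\<gamma> t) v"
  using assms vector_derivative_at sol_speed_spd by metis

lemma d_Sw_le: "d (Sw p) \<le> d p"
proof (rule d_transfer)
  fix \<gamma> L assume a: "adm \<gamma> p L"
  then have L: "(sol_speed \<gamma> has_integral L) {0..1}" by (simp add: adm_def)
  have "d (Sw p + 0) \<le> integral {0..1} (sol_speed \<gamma>)"
    by (rule master[OF a bl_Sw]) (use L in \<open>auto simp: adm_vd spd_def Sw_def add_ac\<close>)
  then show "d (Sw p) \<le> L" using L by (simp add: integral_unique)
qed

lemma d_Sw: "d (Sw p) = d p"
  using d_Sw_le[of p] d_Sw_le[of "Sw p"] by (simp add: Sw_def)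

lemma d_refl_le: "d (Sx (-1) p) \<le> d p"
proof (rule d_transfer)
  fix \<gamma> L assume a: "adm \<gamma> p L"
  then have L: "(sol_speed \<gamma> has_integral L) {0..1}" by (simp add: adm_def)
  have "d (Sx (-1) p + 0) \<le> integral {0..1} (sol_speed \<gamma>)"
    by (rule master[OF a bl_Sx]) (use L in \<open>auto simp: adm_vd spd_def Sx_def\<close>)
  then show "d (Sx (-1) p) \<le> L" using L by (simp add: integral_unique)
qed

lemma d_refl: "d (Sx (-1) p) = d p"
  using d_refl_le[of p] d_refl_le[of "Sx (-1) p"] by (simp add: Sx_def)

lemma d_swap: "d (y, x, -z) = d (x, y, z)"
  using d_Sw[of "(x,y,z)"] by (simp add: Sw_def)

lemma d_neg: "d (-x, y, z) = d (x, y, z)"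
  using d_refl[of "(x,y,z)"] by (simp add: Sx_def)




lemma strict:
  assumes x: "x \<noteq> 0" and c: "\<bar>c\<bar> < 1"
  shows "d (c*x, y, z) < d (x, y, z)"
proof -
  define p where "p = (x,y,z)"
  define D where "D = d p"
  define M where "M = D + 1"
  define k where "k = (1 - c^2)/2"
  define b where "b = exp (-M) * \<bar>x\<bar>"
  define al where "al = b / M"
  define sg where "sg = sgn x"
  have Mpos: "M > 0" unfolding M_def D_def using d_nonneg[of p] by linarith
  have c2: "c^2 < 1" using c by (simp add: abs_square_less_1)
  have k: "0 < k" "k \<le> 1/2" unfolding k_def using c2 by auto
  have bpos: "b > 0" unfolding b_def using x by simp
  have alpos: "al \<ge> 0" unfolding al_def using bpos Mpos by simp
  have sgx: "sg * x = \<bar>x\<bar>" unfolding sg_def by (simp add: abs_sgn)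
  have sgb: "sg * a \<le> \<bar>a\<bar>" for a unfolding sg_def using x
    by (cases "x > 0") (auto simp: sgn_if)
  have main: "d (Sx c p) \<le> L - k*b^2/M" if Lin: "L \<in> lens p" and LM: "L < M" for L
  proof -
    obtain \<gamma> where a: "adm \<gamma> p L" using Lin by (auto simp: lens_def)
    have pw: "\<gamma> piecewise_C1_differentiable_on {0..1}" and g0: "\<gamma> 0 = (0,0,0)" and g1: "\<gamma> 1 = p"
      and Lint: "(sol_speed \<gamma> has_integral L) {0..1}" using a by (auto simp: adm_def)
    have L0: "0 \<le> L" using lens_nonneg Lin by blast
    have X: "((\<lambda>t. fst (vector_derivative \<gamma> (at t))) has_integral x) {0..1}"
      using ftc_x[OF pw, of 0 1] g0 g1 by (simp add: p_def)
    define g where "g = (\<lambda>t. sol_speed \<gamma> t - (2*k*al*exp(-M)* sg) * fst (vector_derivative \<gamma> (at t))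
        + (k*al^2) * sol_speed \<gamma> t)"
    have gi: "(g has_integral (L - (2*k*al*exp(-M)* sg) * x + (k*al^2) * L)) {0..1}"
      unfolding g_def by (intro has_integral_add has_integral_diff Lint has_integral_mult_right X)
    have "d (Sx c p + 0) \<le> integral {0..1} g"
    proof (rule master[OF a bl_Sx])
      show "g integrable_on {0..1}" using gi by blast
      fix t v assume t: "t \<in> {0<..<1}" and v: "(\<gamma> has_vector_derivative v) (at t)"
      have vd: "vector_derivative \<gamma> (at t) = v" by (rule vector_derivative_at[OF v])
      have ss: "sol_speed \<gamma> t = spd (\<gamma> t) v" by (rule adm_vd[OF v])
      define zz where "zz = snd (snd (\<gamma> t))"
      have zb: "zz \<le> L" using zbound[OF a, of t] t by (auto simp: zz_def)
      define u where "u = exp (-zz) * \<bar>fst v\<bar>"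
      define sp where "sp = spd (\<gamma> t) v"
      have u0: "0 \<le> u" unfolding u_def by simp
      have us: "u \<le> sp" unfolding u_def sp_def zz_def by (rule spd_x)
      have E: "exp (-2*zz) = (exp (-zz))^2"
        by (simp add: power2_eq_square flip: exp_add)
      have sp2: "sp^2 = exp (-2*zz) * (fst v)^2 + exp (2*zz) * (fst (snd v))^2 + (snd (snd v))^2"
        unfolding sp_def spd_def zz_def by (simp add: add_nonneg_nonneg)
      have u2: "u^2 = exp (-2*zz) * (fst v)^2" unfolding u_def E by (simp add: power_mult_distrib)
      have eq: "spd (Sx c (\<gamma> t) + t *\<^sub>R 0) (Sx c v + 0) = sqrt (sp^2 - 2*k*u^2)"
      proof -
        have "spd (Sx c (\<gamma> t) + t *\<^sub>R 0) (Sx c v + 0) =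
          sqrt (exp (-2*zz) * (c^2 * (fst v)^2) + exp (2*zz) * (fst (snd v))^2 + (snd (snd v))^2)"
          by (simp add: spd_def Sx_def zz_def power_mult_distrib)
        also have "exp (-2*zz) * (c^2 * (fst v)^2) + exp (2*zz) * (fst (snd v))^2 + (snd (snd v))^2
            = sp^2 - 2*k*u^2"
          unfolding sp2 u2 k_def by (simp add: field_simps)
        finally show ?thesis .
      qed
      have "sqrt (sp^2 - 2*k*u^2) \<le> sp - 2*k*al*u + k*al^2 * sp"
        by (rule key_ineq) (use u0 us k alpos in auto)
      also have "exp (-M) * (sg * fst v) \<le> u"
      proof -
        have "exp (-M) \<le> exp (-zz)" using zb LM by simp
        have "exp (-M) * (sg * fst v) \<le> exp (-M) * \<bar>fst v\<bar>"
          by (rule mult_left_mono[OF sgb]) simp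
        also have "\<dots> \<le> exp (-zz) * \<bar>fst v\<bar>"
          by (rule mult_right_mono) (use \<open>exp (-M) \<le> exp (-zz)\<close> in auto)
        finally have "exp (-M) * (sg * fst v) \<le> exp (-zz) * \<bar>fst v\<bar>" .
        then show ?thesis unfolding u_def .
      qed
      then have "- (2*k*al) * u \<le> - (2*k*al) * (exp (-M) * (sg * fst v))"
        using k alpos by (intro mult_left_mono_neg) auto
      then have "sp - 2*k*al*u + k*al^2 * sp \<le> sp - (2*k*al*exp(-M)* sg) * fst v + (k*al^2) * sp"
        by (simp add: algebra_simps)
      finally show "spd (Sx c (\<gamma> t) + t *\<^sub>R 0) (Sx c v + 0) \<le> g t"
        unfolding eq g_def vd ss sp_def .
    qed
    then have "d (Sx c p) \<le> L - (2*k*al*exp(-M)* sg) * x + (k*al^2) * L"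
      using integral_unique[OF gi] by simp
    also have "\<dots> = L - 2*k*al*b + (k*al^2) * L"
      using sgx by (simp add: b_def algebra_simps)
    also have "\<dots> \<le> L - k*b^2/M"
    proof -
      have "(k*al^2) * L \<le> (k*al^2) * M" using LM k alpos by (intro mult_left_mono) auto
      also have "\<dots> = k*b^2/M" unfolding al_def using Mpos by (simp add: power2_eq_square)
      finally have "(k*al^2) * L \<le> k*b^2/M" .
      moreover have "2*k*al*b = 2*(k*b^2/M)" unfolding al_def by (simp add: power2_eq_square)
      ultimately show ?thesis by linarith
    qed
    finally show ?thesis .
  qed
  have G: "k*b^2/M > 0" using k bpos Mpos by simp
  show ?thesis
  proof (rule ccontr)
    assume "\<not> ?thesis"
    then have "D < min M (d (Sx c p) + k*b^2/M)" using G by (simp add: M_def D_def p_def Sx_def)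
    then obtain L where "L \<in> lens p" "L < min M (d (Sx c p) + k*b^2/M)"
      unfolding D_def using d_approx by blast
    then show False using main[of L] by simp
  qed
qed




lemma drift: "d (x+\<delta>, y, z) \<le> d (x,y,z) + exp (d (x,y,z) + 1) * \<bar>\<delta>\<bar>"
proof -
  define p where "p = (x,y,z)"
  define D where "D = d p"
  define M where "M = D + 1"
  define w where "w = (\<delta>, 0::real, 0::real)"
  have q: "p + w = (x+\<delta>, y, z)" by (simp add: p_def w_def)
  have main: "d (p + w) \<le> L + exp M * \<bar>\<delta>\<bar>" if Lin: "L \<in> lens p" and LM: "L < M" for L
  proof -
    obtain \<gamma> where a: "adm \<gamma> p L" using Lin by (auto simp: lens_def)
    have Lint: "(sol_speed \<gamma> has_integral L) {0..1}" using a by (auto simp: adm_def)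
    define g where "g = (\<lambda>t. sol_speed \<gamma> t + exp M * \<bar>\<delta>\<bar>)"
    have gi: "(g has_integral (L + exp M * \<bar>\<delta>\<bar>)) {0..1}"
      unfolding g_def using has_integral_add[OF Lint has_integral_const_real[of "exp M * \<bar>\<delta>\<bar>" 0 1]]
      by simp
    have "d ((\<lambda>x. x) p + w) \<le> integral {0..1} g"
    proof (rule master[OF a bounded_linear_ident])
      show "g integrable_on {0..1}" using gi by blast
      fix t v assume t: "t \<in> {0<..<1}" and v: "(\<gamma> has_vector_derivative v) (at t)"
      have ss: "sol_speed \<gamma> t = spd (\<gamma> t) v" by (rule adm_vd[OF v])
      define zz where "zz = snd (snd (\<gamma> t))"
      have zb: "- zz \<le> L" using zbound[OF a, of t] t by (auto simp: zz_def)
      have E: "sqrt (exp (-2*zz)) = exp (-zz)"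
      proof -
        have "exp (-2*zz) = (exp (-zz))^2" by (simp add: power2_eq_square flip: exp_add)
        then show ?thesis by simp
      qed
      have "spd (\<gamma> t + t *\<^sub>R w) (v + w) =
          sqrt (exp (-2*zz) * (fst v + \<delta>)^2 + (exp (2*zz) * (fst (snd v))^2 + (snd (snd v))^2))"
        by (simp add: spd_def w_def zz_def add.assoc)
      also have "\<dots> \<le> sqrt (exp (-2*zz) * (fst v)^2 + (exp (2*zz) * (fst (snd v))^2 + (snd (snd v))^2))
          + sqrt (exp (-2*zz)) * \<bar>\<delta>\<bar>"
        by (rule tri_ineq) (auto simp: add_nonneg_nonneg)
      also have "\<dots> = spd (\<gamma> t) v + exp (-zz) * \<bar>\<delta>\<bar>"
        unfolding E by (simp add: spd_def zz_def add.assoc)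
      also have "\<dots> \<le> spd (\<gamma> t) v + exp M * \<bar>\<delta>\<bar>"
        using zb LM by (intro add_left_mono mult_right_mono) auto
      finally show "spd ((\<lambda>x. x) (\<gamma> t) + t *\<^sub>R w) ((\<lambda>x. x) v + w) \<le> g t"
        unfolding g_def ss by simp
    qed
    then show ?thesis using integral_unique[OF gi] by simp
  qed
  show ?thesis
  proof (rule ccontr)
    assume "\<not> ?thesis"
    then have "D < min M (d (p + w) - exp M * \<bar>\<delta>\<bar>)" unfolding q by (simp add: M_def D_def p_def)
    then obtain L where "L \<in> lens p" "L < min M (d (p + w) - exp M * \<bar>\<delta>\<bar>)"
      unfolding D_def using d_approx by blast
    then show False using main[of L] by simp
  qed
qed

lemma d0: "d (0,0,0) = 0"
proof -
  have vd: "vector_derivative (\<lambda>t::real. (0::point3)) (at t) = 0" for t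
    by (simp add: vector_derivative_const_at)
  have pw: "(\<lambda>t::real. (0::point3)) piecewise_C1_differentiable_on {0..1}"
    by (rule piecewise_C1_differentiable_const)
  have ss: "sol_speed (\<lambda>t::real. (0::point3)) = (\<lambda>t. 0)"
    by (rule ext) (simp add: sol_speed_spd vd spd_def)
  have "adm (\<lambda>t. 0) (0,0,0) 0"
    unfolding adm_def ss using pw by (simp add: zero_prod_def has_integral_0)
  then have "d (0,0,0) \<le> 0" by (intro d_le) (auto simp: lens_def)
  then show ?thesis using d_nonneg[of "(0,0,0)"] by linarith
qed

lemma axis: assumes "r > 0" shows "r \<le> d (r * exp r, 0, 0)"
proof (rule d_ge)
  fix L assume "L \<in> lens (r * exp r, 0, 0)"
  then obtain \<gamma> where a: "adm \<gamma> (r * exp r, 0, 0) L" and L0: "0 \<le> L"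
    using lens_nonneg by (auto simp: lens_def)
  have pw: "\<gamma> piecewise_C1_differentiable_on {0..1}" and g0: "\<gamma> 0 = (0,0,0)" and g1: "\<gamma> 1 = (r * exp r, 0, 0)"
    and Lint: "(sol_speed \<gamma> has_integral L) {0..1}" using a by (auto simp: adm_def)
  have X: "((\<lambda>t. fst (vector_derivative \<gamma> (at t))) has_integral r * exp r) {0..1}"
    using ftc_x[OF pw, of 0 1] g0 g1 by simp
  have "r * exp r \<le> exp L * L"
  proof (rule has_integral_le[OF X has_integral_mult_right[OF Lint]])
    fix t :: real assume t: "t \<in> {0..1}"
    define zz where "zz = snd (snd (\<gamma> t))"
    define v where "v = vector_derivative \<gamma> (at t)"
    have zb: "zz \<le> L" using zbound[OF a t] by (auto simp: zz_def)
    have "fst v \<le> \<bar>fst v\<bar>" by simp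
    also have "\<dots> = exp zz * (exp (-zz) * \<bar>fst v\<bar>)" by (simp add: mult.assoc[symmetric] flip: exp_add)
    also have "\<dots> \<le> exp zz * spd (\<gamma> t) v" unfolding zz_def by (intro mult_left_mono spd_x) auto
    also have "\<dots> \<le> exp L * spd (\<gamma> t) v" using zb by (intro mult_right_mono spd_nonneg) auto
    finally show "fst (vector_derivative \<gamma> (at t)) \<le> exp L * sol_speed \<gamma> t"
      by (simp add: v_def sol_speed_spd)
  qed
  show "r \<le> L"
  proof (rule ccontr)
    assume "\<not> r \<le> L"
    then have "exp L * L \<le> exp r * L" using L0 by (intro mult_right_mono) auto
    also have "\<dots> < exp r * r" using \<open>\<not> r \<le> L\<close> by simp
    finally show False using \<open>r * exp r \<le> exp L * L\<close> by (simp add: mult.commute)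
  qed
qed




lemma exists_axis: assumes r: "r > 0" obtains t where "t > 0" "d (t,0,0) = r"
proof -
  let ?g = "\<lambda>t. d (t,0,0)"
  define T where "T = r * exp r"
  have T0: "T > 0" using r by (simp add: T_def)
  have lip1: "?g s \<le> ?g t + exp (?g t + 1) * \<bar>s - t\<bar>" for s t
    using drift[of t "s - t" 0 0] by simp
  have gbound: "?g t \<le> exp 1 * \<bar>t\<bar>" for t using lip1[of t 0] d0 by simp
  define C where "C = exp (exp 1 * T + 1)"
  have Cb: "exp (?g t + 1) \<le> C" if "t \<in> {0..T}" for t
  proof -
    have "exp 1 * \<bar>t\<bar> \<le> exp 1 * T" using that by (intro mult_left_mono) auto
    then have "?g t \<le> exp 1 * T" using gbound[of t] by linarith
    then show ?thesis unfolding C_def by simp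
  qed
  have lip: "C-lipschitz_on {0..T} ?g"
  proof (rule lipschitz_onI)
    fix s t assume s: "s \<in> {0..T}" and t: "t \<in> {0..T}"
    have a: "?g s - ?g t \<le> C * \<bar>s - t\<bar>"
      using lip1[of s t] mult_right_mono[OF Cb[OF t], of "\<bar>s - t\<bar>"] by simp
    have b: "?g t - ?g s \<le> C * \<bar>s - t\<bar>"
      using lip1[of t s] mult_right_mono[OF Cb[OF s], of "\<bar>t - s\<bar>"] by (simp add: abs_minus_commute)
    show "dist (?g s) (?g t) \<le> C * dist s t" using a b by (simp add: dist_real_def)
  next
    show "0 \<le> C" unfolding C_def by simp
  qed
  have cont: "continuous_on {0..T} ?g" by (rule lipschitz_on_continuous_on[OF lip])
  obtain t where t: "0 \<le> t" "t \<le> T" "?g t = r"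
    using IVT'[of ?g 0 r T, OF _ _ _ cont] d0 axis[OF r] T0 r by (auto simp: T_def)
  have "t \<noteq> 0" using t(3) d0 r by auto
  then have "t > 0" using t(1) by linarith
  then show ?thesis using that t(3) by blast
qed

lemma lt_abs: assumes "\<bar>x1\<bar> < \<bar>x2\<bar>" shows "d (x1,y,z) < d (x2,y,z)"
proof -
  have x2: "x2 \<noteq> 0" using assms by auto
  have "\<bar>x1 / x2\<bar> < 1" using assms x2 by (simp add: abs_divide)
  from strict[OF x2 this, of y z] show ?thesis using x2 by simp
qed

lemma abs_eq: assumes "d (x1,y,z) = d (x2,y,z)" shows "\<bar>x1\<bar> = \<bar>x2\<bar>"
  using lt_abs[of x1 x2 y z] lt_abs[of x2 x1 y z] assms by linarith

lemma abs_cases: "\<bar>a\<bar> = \<bar>b::real\<bar> \<Longrightarrow> a = b \<or> a = -b" by auto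

lemma card2: "finite F \<and> card F \<le> 2" if "F \<subseteq> {u, v}" for F :: "'a set"
proof -
  have "finite F" using that finite_subset by blast
  moreover have "card F \<le> card {u, v}" using that by (intro card_mono) auto
  moreover have "card {u, v} \<le> 2" by (simp add: card_insert_if)
  ultimately show ?thesis by linarith
qed

lemma upper_X: "at_most_N_to_one eta_X (sol_sphere r) 2"
  unfolding at_most_N_to_one_def
proof
  fix q :: point3
  obtain q1 q2 q3 where q: "q = (q1,q2,q3)" by (cases q) auto
  let ?F = "{p \<in> sol_sphere r. eta_X p = q}"
  have "\<exists>a. ?F \<subseteq> {(a,q2,q3), (-a,q2,q3)}"
  proof (cases "?F = {}")
    case True then show ?thesis by (metis empty_subsetI)
  next
    case False
    then obtain p0 where p0: "p0 \<in> ?F" by auto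
    obtain a b c where p0e: "p0 = (a,b,c)" by (cases p0) auto
    have "?F \<subseteq> {(a,q2,q3), (-a,q2,q3)}"
    proof
      fix p assume p: "p \<in> ?F"
      obtain x y z where pe: "p = (x,y,z)" by (cases p) auto
      have "y = q2" "z = q3" "b = q2" "c = q3" "d (x,y,z) = r" "d (a,b,c) = r"
        using p p0 by (auto simp: pe p0e q eta_X_def sol_sphere_def)
      then have "\<bar>x\<bar> = \<bar>a\<bar>" using abs_eq[of x q2 q3 a] by simp
      then show "p \<in> {(a,q2,q3), (-a,q2,q3)}" using abs_cases[of x a] \<open>y = q2\<close> \<open>z = q3\<close> pe by auto
    qed
    then show ?thesis by blast
  qed
  then obtain a where "?F \<subseteq> {(a,q2,q3), (-a,q2,q3)}" by blast
  then show "finite ?F \<and> card ?F \<le> 2" by (rule card2)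
qed

lemma upper_Y: "at_most_N_to_one eta_Y (sol_sphere r) 2"
  unfolding at_most_N_to_one_def
proof
  fix q :: point3
  obtain q1 q2 q3 where q: "q = (q1,q2,q3)" by (cases q) auto
  let ?F = "{p \<in> sol_sphere r. eta_Y p = q}"
  have "\<exists>a. ?F \<subseteq> {(q1,a,q3), (q1,-a,q3)}"
  proof (cases "?F = {}")
    case True then show ?thesis by (metis empty_subsetI)
  next
    case False
    then obtain p0 where p0: "p0 \<in> ?F" by auto
    obtain a b c where p0e: "p0 = (b,a,c)" by (cases p0) auto
    have "?F \<subseteq> {(q1,a,q3), (q1,-a,q3)}"
    proof
      fix p assume p: "p \<in> ?F"
      obtain x y z where pe: "p = (x,y,z)" by (cases p) auto
      have "x = q1" "z = q3" "b = q1" "c = q3" "d (x,y,z) = r" "d (b,a,c) = r"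
        using p p0 by (auto simp: pe p0e q eta_Y_def sol_sphere_def)
      then have "d (y,q1,-q3) = d (a,q1,-q3)" using d_swap by metis
      then have "\<bar>y\<bar> = \<bar>a\<bar>" by (rule abs_eq)
      then show "p \<in> {(q1,a,q3), (q1,-a,q3)}" using abs_cases[of y a] \<open>x = q1\<close> \<open>z = q3\<close> pe by auto
    qed
    then show ?thesis by blast
  qed
  then obtain a where "?F \<subseteq> {(q1,a,q3), (q1,-a,q3)}" by blast
  then show "finite ?F \<and> card ?F \<le> 2" by (rule card2)
qed

lemma lower_gen:
  assumes "P1 \<in> S" "P2 \<in> S" "P1 \<noteq> P2" "f P1 = q" "f P2 = q" "at_most_N_to_one f S N"
  shows "2 \<le> N"
proof -
  let ?F = "{p \<in> S. f p = q}"
  have "finite ?F" "card ?F \<le> N" using assms(6) by (auto simp: at_most_N_to_one_def)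
  moreover have "{P1, P2} \<subseteq> ?F" using assms by auto
  ultimately have "card {P1, P2} \<le> N" by (meson card_mono order.trans)
  then show ?thesis using assms(3) by simp
qed

theorem mainTheorem3:
  fixes r :: real
  assumes "r > 0"
  shows "N_num eta_X r = 2 \<and> N_num eta_Y r = 2"
proof -
  obtain t where t: "t > 0" "d (t,0,0) = r" using exists_axis[OF assms] by blast
  have s1: "(t,0,0) \<in> sol_sphere r" "(-t,0,0) \<in> sol_sphere r"
    using t d_neg[of t 0 0] by (auto simp: sol_sphere_def)
  have s2: "(0,t,0) \<in> sol_sphere r" "(0,-t,0) \<in> sol_sphere r"
    using t d_neg[of t 0 0] d_swap[of t 0 0] d_swap[of "-t" 0 0] by (auto simp: sol_sphere_def)
  have "N_num eta_X r = 2"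
    unfolding N_num_def
  proof (rule Least_equality)
    show "at_most_N_to_one eta_X (sol_sphere r) 2" by (rule upper_X)
    fix N assume N: "at_most_N_to_one eta_X (sol_sphere r) N"
    show "2 \<le> N" by (rule lower_gen[OF s1(1) s1(2) _ _ _ N, where q="(0,0,0)"]) (use t in \<open>auto simp: eta_X_def\<close>)
  qed
  moreover have "N_num eta_Y r = 2"
    unfolding N_num_def
  proof (rule Least_equality)
    show "at_most_N_to_one eta_Y (sol_sphere r) 2" by (rule upper_Y)
    fix N assume N: "at_most_N_to_one eta_Y (sol_sphere r) N"
    show "2 \<le> N" by (rule lower_gen[OF s2(1) s2(2) _ _ _ N, where q="(0,0,0)"]) (use t in \<open>auto simp: eta_Y_def\<close>)
  qed
  ultimately show ?thesis by blast
qed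



end
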